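(* There is a numerical constant $C>0$ such that \[ \min_{\mathcal A_\delta}E_h\le C\Big(\delta^2h^{1/2}+h^2\log\frac1h+\delta^4h^{-1/2}\Big) \] whenever $0\le\delta\le1$ and $0<h\le\frac12$.
   Context: Let $B_1=\{x\in\mathbb R^2:|x|<1\}$. For scalar functions $u,w$ on $(0,1)$ define $U(x)=\frac12(u(|x|)-|x|)\frac{x}{|x|}$ and $W(x)=w(|x|)$. For $\delta\in[0,1]$ let $\mathcal A_\delta$ be the set of pairs $(u,w)$ with $(U,W)\in W^{1,2}(B_1;\mathbb R^2)\times W^{2,2}(B_1)$, $w(0)=0$, $w(1)=1-\delta$. For $h>0$, \[ E_h(u,w)=\int_0^1\frac{u^2}{r}+r(u'+w'^2-1)^2+h^2\Big(rw''^2+\frac{w'^2}{r}\Big)dr . \] *)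

theory Defs
  imports "HOL-Analysis.Analysis"
begin

fun Ck :: "nat \<Rightarrow> ('a::euclidean_space \<Rightarrow> real) \<Rightarrow> bool" where
  "Ck 0 f = continuous_on UNIV f"
| "Ck (Suc n) f = (continuous_on UNIV f \<and> f differentiable_on UNIV \<and>
      (\<forall>i\<in>Basis. Ck n (\<lambda>x. frechet_derivative f (at x) i)))"

definition test_fun :: "'a::euclidean_space set \<Rightarrow> ('a \<Rightarrow> real) \<Rightarrow> bool" where
  "test_fun \<Omega> \<phi> \<longleftrightarrow> (\<forall>n. Ck n \<phi>) \<and> compact (closure {x. \<phi> x \<noteq> 0})
      \<and> closure {x. \<phi> x \<noteq> 0} \<subseteq> \<Omega>"

definition L2_on :: "'a::euclidean_space set \<Rightarrow> ('a \<Rightarrow> 'b::euclidean_space) \<Rightarrow> bool" where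
  "L2_on \<Omega> f \<longleftrightarrow> f \<in> borel_measurable (lebesgue_on \<Omega>)
      \<and> integrable (lebesgue_on \<Omega>) (\<lambda>x. (norm (f x))\<^sup>2)"

definition weak_partial :: "'a::euclidean_space set \<Rightarrow> ('a \<Rightarrow> 'b::euclidean_space) \<Rightarrow> 'a \<Rightarrow> ('a \<Rightarrow> 'b) \<Rightarrow> bool" where
  "weak_partial \<Omega> f i g \<longleftrightarrow> (\<forall>\<phi>. test_fun \<Omega> \<phi> \<longrightarrow>
      integral\<^sup>L (lebesgue_on \<Omega>) (\<lambda>x. frechet_derivative \<phi> (at x) i *\<^sub>R f x)
      = - integral\<^sup>L (lebesgue_on \<Omega>) (\<lambda>x. \<phi> x *\<^sub>R g x))"

definition W12 :: "'a::euclidean_space set \<Rightarrow> ('a \<Rightarrow> 'b::euclidean_space) \<Rightarrow> bool" where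
  "W12 \<Omega> f \<longleftrightarrow> L2_on \<Omega> f \<and> (\<forall>i\<in>Basis. \<exists>g. L2_on \<Omega> g \<and> weak_partial \<Omega> f i g)"

definition W22 :: "'a::euclidean_space set \<Rightarrow> ('a \<Rightarrow> 'b::euclidean_space) \<Rightarrow> bool" where
  "W22 \<Omega> f \<longleftrightarrow> L2_on \<Omega> f \<and> (\<forall>i\<in>Basis. \<exists>g. W12 \<Omega> g \<and> weak_partial \<Omega> f i g)"

definition B1 :: "(real^2) set" where "B1 = ball 0 1"

definition Ufun :: "(real \<Rightarrow> real) \<Rightarrow> real^2 \<Rightarrow> real^2" where
  "Ufun u x = (1/2 * (u (norm x) - norm x)) *\<^sub>R (inverse (norm x) *\<^sub>R x)"

definition Wfun :: "(real \<Rightarrow> real) \<Rightarrow> real^2 \<Rightarrow> real" where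
  "Wfun w x = w (norm x)"

text \<open>Admissible class A_delta.  u and w are taken to be the continuous
  representatives (u continuous on (0,1), w continuous on [0,1]); this is the
  convention under which w(0), w(1), u', w', w'' are meaningful pointwise.\<close>
definition Adm :: "real \<Rightarrow> ((real \<Rightarrow> real) \<times> (real \<Rightarrow> real)) set" where
  "Adm \<delta> = {(u, w). W12 B1 (Ufun u) \<and> W22 B1 (Wfun w)
      \<and> continuous_on {0<..<1} u \<and> continuous_on {0..1} w
      \<and> w 0 = 0 \<and> w 1 = 1 - \<delta>}"

text \<open>The energy (integrand is nonnegative; value in [0, infinity]).\<close>
definition Eh :: "real \<Rightarrow> (real \<Rightarrow> real) \<Rightarrow> (real \<Rightarrow> real) \<Rightarrow> ennreal" where
  "Eh h u w = (\<integral>\<^sup>+ r \<in> {0<..<1}. ennreal (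
        (u r)\<^sup>2 / r + r * (deriv u r + (deriv w r)\<^sup>2 - 1)\<^sup>2
        + h\<^sup>2 * (r * (deriv (deriv w) r)\<^sup>2 + (deriv w r)\<^sup>2 / r)) \<partial>lborel)"

end

theory Submission
  imports Defs
begin

lemma deriv_zero_outside:
  fixes p :: "'a::euclidean_space \<Rightarrow> 'b::real_normed_vector"
  assumes der: "(p has_derivative p') (at x)" and K: "closed K" "\<And>y. y \<notin> K \<Longrightarrow> p y = 0" and x: "x \<notin> K"
  shows "p' = (\<lambda>_. 0)"
proof -
  have "((\<lambda>_. 0) has_derivative (\<lambda>_. 0)) (at x)" by simp
  then have "(p has_derivative (\<lambda>_. 0)) (at x)"
    by (rule has_derivative_transform_within_open[of _ _ _ _ "-K"]) (use K x in auto)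
  with der show ?thesis using has_derivative_unique by blast
qed

lemma cont_compact_integrable:
  fixes g :: "'a::euclidean_space \<Rightarrow> 'b::euclidean_space"
  assumes "continuous_on UNIV g" "compact K" "\<And>x. x \<notin> K \<Longrightarrow> g x = 0"
  shows "integrable lborel g"
proof -
  have "integrable lborel (\<lambda>x. indicator K x *\<^sub>R g x)"
    by (rule borel_integrable_compact) (use assms in \<open>auto intro: continuous_on_subset\<close>)
  also have "(\<lambda>x. indicator K x *\<^sub>R g x) = g"
    using assms(3) by (auto simp: indicator_def fun_eq_iff)
  finally show ?thesis .
qed

lemma lborel_translate:
  fixes g :: "'a::euclidean_space \<Rightarrow> 'b::euclidean_space"
  assumes "g \<in> borel_measurable borel"
  shows "integral\<^sup>L lborel (\<lambda>x. g (c + x)) = integral\<^sup>L lborel g"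
proof -
  have "lborel = distr lborel borel (\<lambda>x. c + x)"
    using lborel_affine[of 1 c] by (simp add: density_1)
  then have "integral\<^sup>L lborel g = integral\<^sup>L (distr lborel borel (\<lambda>x. c + x)) g" by simp
  also have "\<dots> = integral\<^sup>L lborel (\<lambda>x. g (c + x))"
    by (rule integral_distr) (use assms in auto)
  finally show ?thesis by simp
qed

lemma dir_deriv_lim:
  fixes p :: "'a::euclidean_space \<Rightarrow> 'b::euclidean_space"
  assumes der: "(p has_derivative p') (at x)"
  shows "(\<lambda>n. real (Suc n) *\<^sub>R (p (x + inverse (real (Suc n)) *\<^sub>R v) - p x)) \<longlonglongrightarrow> p' v"
proof -
  define g where "g t = p (x + t *\<^sub>R v)" for t :: real
  have bl: "bounded_linear p'" using der by (rule has_derivative_bounded_linear)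
  have l1: "((\<lambda>t. x + t *\<^sub>R v) has_derivative (\<lambda>t. t *\<^sub>R v)) (at 0)"
    by (auto intro!: derivative_eq_intros)
  have "(g has_derivative (\<lambda>t. p' (t *\<^sub>R v))) (at 0)"
    unfolding g_def using has_derivative_compose[OF l1, of p p'] der by simp
  moreover have "(\<lambda>t. p' (t *\<^sub>R v)) = (\<lambda>t. t *\<^sub>R p' v)"
    using bl by (simp add: linear_simps bounded_linear.linear fun_eq_iff linear_scale)
  ultimately have gd: "(g has_derivative (\<lambda>t. t *\<^sub>R p' v)) (at 0)" by simp
  then have t1: "(\<lambda>h. norm (g h - g 0 - h *\<^sub>R p' v) / norm h) \<midarrow>0\<rightarrow> 0"
    by (simp add: has_derivative_at)
  have eq: "norm (g h - g 0 - h *\<^sub>R p' v) / norm h = norm (inverse h *\<^sub>R (g h - g 0) - p' v)" if "h \<noteq> 0" for h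
  proof -
    have "g h - g 0 - h *\<^sub>R p' v = h *\<^sub>R (inverse h *\<^sub>R (g h - g 0) - p' v)"
      using that by (simp add: algebra_simps)
    then show ?thesis using that by simp
  qed
  have ev: "\<forall>\<^sub>F h in at (0::real). norm (g h - g 0 - h *\<^sub>R p' v) / norm h = norm (inverse h *\<^sub>R (g h - g 0) - p' v)"
    unfolding eventually_at_filter by (rule always_eventually) (metis eq)
  have "(\<lambda>h. norm (inverse h *\<^sub>R (g h - g 0) - p' v)) \<midarrow>0\<rightarrow> 0"
    using tendsto_cong[OF ev] t1 by simp
  then have L: "(\<lambda>h. inverse h *\<^sub>R (g h - g 0)) \<midarrow>0\<rightarrow> p' v"
    by (simp add: tendsto_norm_zero_iff LIM_zero_iff)
  have F: "filterlim (\<lambda>n. inverse (real (Suc n))) (at 0) sequentially"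
    by (rule filterlim_atI) (use LIMSEQ_inverse_real_of_nat in auto)
  have "(\<lambda>n. inverse (inverse (real (Suc n))) *\<^sub>R (g (inverse (real (Suc n))) - g 0)) \<longlonglongrightarrow> p' v"
    using filterlim_compose[OF L F] by (simp add: o_def)
  then show ?thesis by (simp add: g_def)
qed



lemma ibp_zero:
  fixes p :: "'a::euclidean_space \<Rightarrow> 'b::euclidean_space" and p' :: "'a \<Rightarrow> 'a \<Rightarrow> 'b"
  assumes der: "\<And>x. (p has_derivative p' x) (at x)"
    and cont: "continuous_on UNIV (\<lambda>x. p' x v)"
    and K: "compact K" "\<And>x. x \<notin> K \<Longrightarrow> p x = 0"
  shows "integrable lborel (\<lambda>x. p' x v) \<and> integral\<^sup>L lborel (\<lambda>x. p' x v) = 0"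
proof -
  define D where "D = (\<lambda>x. p' x v)"
  have Dz: "D x = 0" if "x \<notin> K" for x
    using deriv_zero_outside[OF der compact_imp_closed[OF K(1)] K(2) that] by (simp add: D_def)
  have contp: "continuous_on UNIV p"
    using der by (meson continuous_at_imp_continuous_on has_derivative_continuous)
  have "compact (D ` K)" using K(1) cont unfolding D_def
    by (intro compact_continuous_image) (auto intro: continuous_on_subset)
  then obtain M where M0: "M > 0" and MB: "\<forall>y\<in>D ` K. norm y \<le> M"
    using compact_imp_bounded bounded_pos by metis
  have M: "norm (D x) \<le> M" for x
    using MB M0 by (cases "x \<in> K") (auto simp: Dz)
  obtain R where R: "\<forall>x\<in>K. norm x \<le> R"
    using compact_imp_bounded[OF K(1)] bounded_iff by metis
  define Q where "Q n x = real (Suc n) *\<^sub>R (p (x + inverse (real (Suc n)) *\<^sub>R v) - p x)" for n x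
  have Qint: "integral\<^sup>L lborel (Q n) = 0" for n
  proof -
    define c where "c = inverse (real (Suc n)) *\<^sub>R v"
    have i1: "integrable lborel p" by (rule cont_compact_integrable[OF contp K])
    have i2: "integrable lborel (\<lambda>x. p (x + c))"
    proof (rule cont_compact_integrable[where K = "(\<lambda>x. x - c) ` K"])
      show "continuous_on UNIV (\<lambda>x. p (x + c))"
        by (rule continuous_on_compose2[OF contp]) (auto intro: continuous_intros)
      show "compact ((\<lambda>x. x - c) ` K)"
        by (rule compact_continuous_image) (auto intro: continuous_intros K(1))
      show "p (x + c) = 0" if "x \<notin> (\<lambda>x. x - c) ` K" for x
      proof -
        have "x + c \<notin> K" using that by (metis add_diff_cancel image_eqI)
        then show ?thesis by (rule K(2))
      qed
    qed
    have "integral\<^sup>L lborel (\<lambda>x. p (c + x)) = integral\<^sup>L lborel p"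
      by (rule lborel_translate) (rule borel_measurable_continuous_onI[OF contp])
    then have "integral\<^sup>L lborel (\<lambda>x. p (x + c)) = integral\<^sup>L lborel p" by (simp add: add.commute)
    then show ?thesis unfolding Q_def c_def[symmetric] using i1 i2 by simp
  qed
  have lim: "(\<lambda>n. Q n x) \<longlonglongrightarrow> D x" for x
    unfolding Q_def D_def by (rule dir_deriv_lim[OF der])
  define S where "S = cball (0::'a) (R + norm v)"
  have bnd: "norm (Q n x) \<le> indicator S x * M" for n x
  proof (cases "x \<in> S")
    case False
    have a: "x \<notin> K"
    proof
      assume "x \<in> K" then have "norm x \<le> R" using R by auto
      then show False using False norm_ge_zero[of v] by (simp add: S_def)
    qed
    have "norm (inverse (real (Suc n)) *\<^sub>R v) \<le> norm v"
      using mult_left_le_one_le[of "norm v" "inverse (real (Suc n))"] by (simp add: inverse_le_1_iff)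
    have "x + inverse (real (Suc n)) *\<^sub>R v \<notin> K"
    proof
      assume "x + inverse (real (Suc n)) *\<^sub>R v \<in> K"
      then have "norm (x + inverse (real (Suc n)) *\<^sub>R v) \<le> R" using R by auto
      moreover have "norm x \<le> norm (x + inverse (real (Suc n)) *\<^sub>R v) + norm (inverse (real (Suc n)) *\<^sub>R v)"
        using norm_triangle_ineq4[of "x + inverse (real (Suc n)) *\<^sub>R v" "inverse (real (Suc n)) *\<^sub>R v"] by simp
      ultimately show False using False \<open>norm (inverse (real (Suc n)) *\<^sub>R v) \<le> norm v\<close>
        by (auto simp: S_def dist_norm)
    qed
    then show ?thesis using a False by (simp add: Q_def K(2))
  next
    case True
    define b where "b = inverse (real (Suc n))"
    have b0: "0 < b" by (simp add: b_def)
    define g where "g t = p (x + t *\<^sub>R v)" for t :: real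
    have gd: "(g has_derivative (\<lambda>s. s *\<^sub>R D (x + t *\<^sub>R v))) (at t)" for t
    proof -
      have "(g has_derivative (\<lambda>s. p' (x + t *\<^sub>R v) (s *\<^sub>R v))) (at t)"
      proof -
        have l1: "((\<lambda>t. x + t *\<^sub>R v) has_derivative (\<lambda>t. t *\<^sub>R v)) (at t)"
          by (auto intro!: derivative_eq_intros)
        show ?thesis
          unfolding g_def using has_derivative_compose[OF l1 der[of "x + t *\<^sub>R v"]] by simp
      qed
      moreover have "(\<lambda>s. p' (x + t *\<^sub>R v) (s *\<^sub>R v)) = (\<lambda>s. s *\<^sub>R D (x + t *\<^sub>R v))"
        using has_derivative_bounded_linear[OF der[of "x + t *\<^sub>R v"]]
        by (simp add: D_def fun_eq_iff linear_scale bounded_linear.linear)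
      ultimately show ?thesis by simp
    qed
    have "continuous_on {0..b} g"
      unfolding g_def by (rule continuous_on_compose2[OF contp]) (auto intro!: continuous_intros)
    then obtain t where "norm (g b - g 0) \<le> norm ((b - 0) *\<^sub>R D (x + t *\<^sub>R v))"
      using mvt_general[OF b0, of g "\<lambda>t s. s *\<^sub>R D (x + t *\<^sub>R v)"] gd by auto
    also have "\<dots> \<le> b * M" using M[of "x + t *\<^sub>R v"] b0 by (simp add: mult_left_mono)
    finally have "norm (g b - g 0) \<le> b * M" .
    then have "real (Suc n) * norm (g b - g 0) \<le> real (Suc n) * (b * M)"
      by (intro mult_left_mono) auto
    also have "real (Suc n) * (b * M) = M" by (simp add: b_def)
    finally have "norm (Q n x) \<le> M" by (simp add: Q_def g_def b_def)
    then show ?thesis using True by simp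
  qed
  have wint: "integrable lborel (\<lambda>x. indicator S x * M)"
    using borel_integrable_compact[of S "\<lambda>_. M"] by (simp add: S_def)
  have measD: "D \<in> borel_measurable lborel"
    unfolding D_def using borel_measurable_continuous_onI[OF cont] by simp
  have measQ: "Q n \<in> borel_measurable lborel" for n
  proof -
    have "continuous_on UNIV (Q n)" unfolding Q_def
      by (intro continuous_intros continuous_on_compose2[OF contp]) (auto intro: continuous_intros)
    then show ?thesis using borel_measurable_continuous_onI by simp
  qed
  have "integrable lborel D"
    by (rule integrable_dominated_convergence[where s=Q, OF measD measQ wint]) (use lim bnd in auto)
  moreover have "(\<lambda>n. integral\<^sup>L lborel (Q n)) \<longlonglongrightarrow> integral\<^sup>L lborel D"
    by (rule integral_dominated_convergence[where s=Q, OF measD measQ wint]) (use lim bnd in auto)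
  then have "integral\<^sup>L lborel D = 0" using Qint by (simp add: LIMSEQ_const_iff)
  ultimately show ?thesis by (simp add: D_def)
qed


lemma B1_sets: "B1 \<in> sets lebesgue" "B1 \<in> sets lborel"
  by (auto simp: B1_def)

lemma L2_cont_int:
  fixes g :: "real^2 \<Rightarrow> real"
  assumes "continuous_on UNIV g"
  shows "integrable (lebesgue_on B1) g"
proof -
  have "integrable lborel (\<lambda>x. indicator (cball 0 1) x *\<^sub>R g x)"
    by (rule borel_integrable_compact) (use assms in \<open>auto intro: continuous_on_subset\<close>)
  then have "integrable lborel (\<lambda>x. indicator (cball 0 1) x *\<^sub>R g x * indicator B1 x)"
    by (rule integrable_real_mult_indicator[OF B1_sets(2)])
  also have "(\<lambda>x. indicator (cball 0 1) x *\<^sub>R g x * indicator B1 x) = (\<lambda>x. indicator B1 x *\<^sub>R g x)"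
    by (auto simp: fun_eq_iff indicator_def B1_def)
  finally have i: "integrable lborel (\<lambda>x. indicator B1 x *\<^sub>R g x)" .
  have "integrable lebesgue (\<lambda>x. indicator B1 x *\<^sub>R g x)"
    using i by (subst integrable_completion) (use borel_measurable_integrable[OF i] in auto)
  then show ?thesis
    by (subst integrable_restrict_space) (use B1_sets in auto)
qed

lemma L2_cont:
  fixes g :: "real^2 \<Rightarrow> 'b::euclidean_space"
  assumes "continuous_on UNIV g"
  shows "L2_on B1 g"
  unfolding L2_on_def
proof
  show "g \<in> borel_measurable (lebesgue_on B1)"
    by (rule continuous_imp_measurable_on_sets_lebesgue) (use assms B1_sets in \<open>auto intro: continuous_on_subset\<close>)
  show "integrable (lebesgue_on B1) (\<lambda>x. (norm (g x))\<^sup>2)"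
    by (rule L2_cont_int) (use assms in \<open>auto intro!: continuous_intros\<close>)
qed

lemma integral_B1_lborel:
  fixes g :: "real^2 \<Rightarrow> 'b::euclidean_space"
  assumes "g \<in> borel_measurable borel" "\<And>x. x \<notin> B1 \<Longrightarrow> g x = 0"
  shows "integral\<^sup>L (lebesgue_on B1) g = integral\<^sup>L lborel g"
proof -
  have "integral\<^sup>L (lebesgue_on B1) g = integral\<^sup>L lebesgue (\<lambda>x. if x \<in> B1 then g x else 0)"
    by (rule Lebesgue_Measure.integral_restrict_UNIV[symmetric]) (rule B1_sets)
  also have "(\<lambda>x. if x \<in> B1 then g x else 0) = g" using assms(2) by auto
  also have "integral\<^sup>L lebesgue g = integral\<^sup>L lborel g"
    by (rule integral_completion) (use assms in simp)
  finally show ?thesis .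
qed

lemma test_fun_C1:
  assumes "test_fun \<Omega> \<phi>"
  shows "\<And>x. (\<phi> has_derivative frechet_derivative \<phi> (at x)) (at x)"
    and "continuous_on UNIV \<phi>"
    and "\<And>i. i \<in> Basis \<Longrightarrow> continuous_on UNIV (\<lambda>x. frechet_derivative \<phi> (at x) i)"
    and "compact (closure {x. \<phi> x \<noteq> 0})" "closure {x. \<phi> x \<noteq> 0} \<subseteq> \<Omega>"
proof -
  have C: "Ck (Suc 0) \<phi>" using assms by (auto simp: test_fun_def)
  then have "\<phi> differentiable_on UNIV" by simp
  then show "(\<phi> has_derivative frechet_derivative \<phi> (at x)) (at x)" for x
    by (metis UNIV_I differentiable_on_def frechet_derivative_works)
  show "continuous_on UNIV \<phi>" using C by simp
  show "continuous_on UNIV (\<lambda>x. frechet_derivative \<phi> (at x) i)" if "i \<in> Basis" for i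
    using C that by simp
  show "compact (closure {x. \<phi> x \<noteq> 0})" "closure {x. \<phi> x \<noteq> 0} \<subseteq> \<Omega>"
    using assms by (auto simp: test_fun_def)
qed

lemma weak_partial_C1:
  fixes f :: "real^2 \<Rightarrow> 'b::euclidean_space" and f' :: "real^2 \<Rightarrow> real^2 \<Rightarrow> 'b"
  assumes der: "\<And>x. (f has_derivative f' x) (at x)"
    and cont: "continuous_on UNIV (\<lambda>x. f' x i)" and i: "i \<in> Basis"
  shows "weak_partial B1 f i (\<lambda>x. f' x i)"
  unfolding weak_partial_def
proof (intro allI impI)
  fix \<phi> assume tf: "test_fun B1 \<phi>"
  note T = test_fun_C1[OF tf]
  define K where "K = closure {x. \<phi> x \<noteq> 0}"
  have K: "compact K" "K \<subseteq> B1" "\<And>x. x \<notin> K \<Longrightarrow> \<phi> x = 0"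
    using T(4,5) closure_subset[of "{x. \<phi> x \<noteq> 0}"] unfolding K_def by auto
  define \<phi>' where "\<phi>' x = frechet_derivative \<phi> (at x)" for x
  have contf: "continuous_on UNIV f"
    using der by (meson continuous_at_imp_continuous_on has_derivative_continuous)
  define p where "p x = \<phi> x *\<^sub>R f x" for x
  define p' where "p' x = (\<lambda>h. \<phi> x *\<^sub>R f' x h + \<phi>' x h *\<^sub>R f x)" for x
  have pd: "(p has_derivative p' x) (at x)" for x
    unfolding p_def p'_def \<phi>'_def by (rule has_derivative_scaleR[OF T(1) der])
  define A where "A x = \<phi>' x i *\<^sub>R f x" for x
  define B where "B x = \<phi> x *\<^sub>R f' x i" for x
  have cA: "continuous_on UNIV A" unfolding A_def \<phi>'_def
    using T(3)[OF i] contf by (intro continuous_intros) auto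
  have cB: "continuous_on UNIV B" unfolding B_def
    using T(2) cont by (intro continuous_intros) auto
  have zA: "A x = 0" if "x \<notin> K" for x
  proof -
    have "\<phi>' x = (\<lambda>_. 0)" unfolding \<phi>'_def
      by (rule deriv_zero_outside[OF T(1) compact_imp_closed[OF K(1)] K(3) that])
    then show ?thesis by (simp add: A_def)
  qed
  have zB: "B x = 0" if "x \<notin> K" for x using K(3)[OF that] by (simp add: B_def)
  have iA: "integrable lborel A" by (rule cont_compact_integrable[OF cA K(1) zA])
  have iB: "integrable lborel B" by (rule cont_compact_integrable[OF cB K(1) zB])
  have cp: "continuous_on UNIV (\<lambda>x. p' x i)"
  proof -
    have "(\<lambda>x. p' x i) = (\<lambda>x. B x + A x)" by (simp add: p'_def A_def B_def fun_eq_iff)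
    then show ?thesis using continuous_on_add[OF cB cA] by metis
  qed
  have "integral\<^sup>L lborel (\<lambda>x. p' x i) = 0"
    using ibp_zero[OF pd cp K(1)] K(3) by (simp add: p_def)
  also have "(\<lambda>x. p' x i) = (\<lambda>x. B x + A x)" by (simp add: p'_def A_def B_def fun_eq_iff)
  finally have "integral\<^sup>L lborel B + integral\<^sup>L lborel A = 0"
    using iA iB by simp
  moreover have "integral\<^sup>L (lebesgue_on B1) A = integral\<^sup>L lborel A"
    by (rule integral_B1_lborel) (use cA borel_measurable_continuous_onI zA K(2) in auto)
  moreover have "integral\<^sup>L (lebesgue_on B1) B = integral\<^sup>L lborel B"
    by (rule integral_B1_lborel) (use cB borel_measurable_continuous_onI zB K(2) in auto)
  ultimately show "integral\<^sup>L (lebesgue_on B1) (\<lambda>x. frechet_derivative \<phi> (at x) i *\<^sub>R f x) =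
        - integral\<^sup>L (lebesgue_on B1) (\<lambda>x. \<phi> x *\<^sub>R f' x i)"
    unfolding A_def B_def \<phi>'_def by (simp add: eq_neg_iff_add_eq_0 add.commute)
qed

lemma C1_W12:
  fixes f :: "real^2 \<Rightarrow> 'b::euclidean_space" and f' :: "real^2 \<Rightarrow> real^2 \<Rightarrow> 'b"
  assumes der: "\<And>x. (f has_derivative f' x) (at x)"
    and cont: "\<And>i. i \<in> Basis \<Longrightarrow> continuous_on UNIV (\<lambda>x. f' x i)"
  shows "W12 B1 f"
  unfolding W12_def
proof
  show "L2_on B1 f"
    by (rule L2_cont) (use der in \<open>meson continuous_at_imp_continuous_on has_derivative_continuous\<close>)
  show "\<forall>i\<in>Basis. \<exists>g. L2_on B1 g \<and> weak_partial B1 f i g"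
    using L2_cont cont weak_partial_C1[OF der] by blast
qed

lemma C2_W22:
  fixes f :: "real^2 \<Rightarrow> real" and f' :: "real^2 \<Rightarrow> real^2 \<Rightarrow> real" and f'' :: "real^2 \<Rightarrow> real^2 \<Rightarrow> real^2 \<Rightarrow> real"
  assumes der: "\<And>x. (f has_derivative f' x) (at x)"
    and der2: "\<And>i x. i \<in> Basis \<Longrightarrow> ((\<lambda>x. f' x i) has_derivative f'' x i) (at x)"
    and cont: "\<And>i j. i \<in> Basis \<Longrightarrow> j \<in> Basis \<Longrightarrow> continuous_on UNIV (\<lambda>x. f'' x i j)"
  shows "W22 B1 f"
  unfolding W22_def
proof
  show "L2_on B1 f"
    by (rule L2_cont) (use der in \<open>meson continuous_at_imp_continuous_on has_derivative_continuous\<close>)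
  show "\<forall>i\<in>Basis. \<exists>g. W12 B1 g \<and> weak_partial B1 f i g"
  proof
    fix i :: "real^2" assume i: "i \<in> Basis"
    have c1: "continuous_on UNIV (\<lambda>x. f' x i)"
      using der2[OF i] by (meson continuous_at_imp_continuous_on has_derivative_continuous)
    show "\<exists>g. W12 B1 g \<and> weak_partial B1 f i g"
      by (intro exI[of _ "\<lambda>x. f' x i"] conjI C1_W12[OF der2[OF i]] weak_partial_C1[OF der c1 i]) (use cont i in auto)
  qed
qed


lemma inner_self_deriv:
  "((\<lambda>x::'a::real_inner. x \<bullet> x) has_derivative (\<lambda>h. 2 * (x \<bullet> h))) (at x)"
  by (auto intro!: derivative_eq_intros simp: inner_commute)

lemma comp_inner_deriv:
  fixes F F1 :: "real \<Rightarrow> real"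
  assumes d1: "\<And>s. 0 \<le> s \<Longrightarrow> (F has_real_derivative F1 s) (at s)"
  shows "((\<lambda>x::'a::real_inner. F (x \<bullet> x)) has_derivative (\<lambda>h. F1 (x \<bullet> x) * (2 * (x \<bullet> h)))) (at x)"
proof -
  have "(F has_derivative (\<lambda>t. F1 (x \<bullet> x) * t)) (at (x \<bullet> x))"
    using d1[of "x \<bullet> x"] by (simp add: has_field_derivative_def)
  from has_derivative_compose[OF inner_self_deriv this] show ?thesis by simp
qed

lemma cont_comp_inner:
  fixes F :: "real \<Rightarrow> real"
  assumes "continuous_on {0..} F"
  shows "continuous_on UNIV (\<lambda>x::'a::real_inner. F (x \<bullet> x))"
  by (rule continuous_on_compose2[OF assms]) (auto intro!: continuous_intros)

lemma deriv_cont_on: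
  fixes F F1 :: "real \<Rightarrow> real"
  assumes d1: "\<And>s. 0 \<le> s \<Longrightarrow> (F has_real_derivative F1 s) (at s)"
  shows "continuous_on {0..} F"
  using d1 by (meson DERIV_continuous atLeast_iff continuous_at_imp_continuous_on)

lemma radial_W22:
  fixes F F1 F2 :: "real \<Rightarrow> real"
  assumes d1: "\<And>s. 0 \<le> s \<Longrightarrow> (F has_real_derivative F1 s) (at s)"
      and d2: "\<And>s. 0 \<le> s \<Longrightarrow> (F1 has_real_derivative F2 s) (at s)"
      and c2: "continuous_on {0..} F2"
  shows "W22 B1 (\<lambda>x::real^2. F (x \<bullet> x))"
proof (rule C2_W22)
  show "((\<lambda>x::real^2. F (x \<bullet> x)) has_derivative (\<lambda>h. F1 (x \<bullet> x) * (2 * (x \<bullet> h)))) (at x)" for x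
    by (rule comp_inner_deriv[OF d1])
  show "((\<lambda>x. F1 (x \<bullet> x) * (2 * (x \<bullet> i))) has_derivative
        (\<lambda>h. F1 (x \<bullet> x) * (2 * (h \<bullet> i)) + F2 (x \<bullet> x) * (2 * (x \<bullet> h)) * (2 * (x \<bullet> i)))) (at x)"
    for i x :: "real^2"
  proof -
    have a: "((\<lambda>x::real^2. F1 (x \<bullet> x)) has_derivative (\<lambda>h. F2 (x \<bullet> x) * (2 * (x \<bullet> h)))) (at x)"
      by (rule comp_inner_deriv[OF d2])
    have b: "((\<lambda>x::real^2. 2 * (x \<bullet> i)) has_derivative (\<lambda>h. 2 * (h \<bullet> i))) (at x)"
      by (auto intro!: derivative_eq_intros)
    show ?thesis using has_derivative_mult[OF a b] by simp
  qed
  show "continuous_on UNIV (\<lambda>x. F1 (x \<bullet> x) * (2 * (j \<bullet> i)) + F2 (x \<bullet> x) * (2 * (x \<bullet> j)) * (2 * (x \<bullet> i)))"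
    for i j :: "real^2"
    using cont_comp_inner[OF deriv_cont_on[OF d2]] cont_comp_inner[OF c2]
    by (intro continuous_intros) auto
qed

lemma radial_W12:
  fixes G G1 :: "real \<Rightarrow> real"
  assumes d1: "\<And>s. 0 \<le> s \<Longrightarrow> (G has_real_derivative G1 s) (at s)"
      and c1: "continuous_on {0..} G1"
  shows "W12 B1 (\<lambda>x::real^2. G (x \<bullet> x) *\<^sub>R x)"
proof (rule C1_W12)
  show "((\<lambda>x::real^2. G (x \<bullet> x) *\<^sub>R x) has_derivative (\<lambda>h. G (x \<bullet> x) *\<^sub>R h + (G1 (x \<bullet> x) * (2 * (x \<bullet> h))) *\<^sub>R x)) (at x)" for x
    using has_derivative_scaleR[OF comp_inner_deriv[OF d1] has_derivative_ident] by simp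
  show "continuous_on UNIV (\<lambda>x::real^2. G (x \<bullet> x) *\<^sub>R i + (G1 (x \<bullet> x) * (2 * (x \<bullet> i))) *\<^sub>R x)" for i :: "real^2"
    using cont_comp_inner[OF deriv_cont_on[OF d1]] cont_comp_inner[OF c1]
    by (intro continuous_intros) auto
qed


lemma sq2: "(a + b)\<^sup>2 \<le> 2 * a\<^sup>2 + 2 * (b::real)\<^sup>2"
proof -
  have "0 \<le> (a - b)\<^sup>2" by simp
  then show ?thesis by (simp add: power2_eq_square algebra_simps)
qed

lemma sq3: "(a + b + c)\<^sup>2 \<le> 3 * (a\<^sup>2 + b\<^sup>2 + (c::real)\<^sup>2)"
proof -
  have "0 \<le> (a - b)\<^sup>2 + (a - c)\<^sup>2 + (b - c)\<^sup>2" by simp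
  then show ?thesis by (simp add: power2_eq_square algebra_simps)
qed

lemma sq4: "(a + b + c + d)\<^sup>2 \<le> 4 * (a\<^sup>2 + b\<^sup>2 + c\<^sup>2 + (d::real)\<^sup>2)"
proof -
  have "0 \<le> (a - b)\<^sup>2 + (a - c)\<^sup>2 + (a - d)\<^sup>2 + (b - c)\<^sup>2 + (b - d)\<^sup>2 + (c - d)\<^sup>2" by simp
  then show ?thesis by (simp add: power2_eq_square algebra_simps)
qed

locale pw =
  fixes r h m c q E E1 :: real
  assumes r0: "0 < r" and r1: "r < 1" and h0: "0 < h" and h1: "h \<le> 1/2"
    and m0: "0 < m" and m2: "m\<^sup>2 = h" and q0: "0 < q" and q2: "q\<^sup>2 = r\<^sup>2 + h\<^sup>2"
    and rq: "r \<le> q" and q1: "\<bar>q - 1\<bar> \<le> h + (1 - r)"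
    and E0: "0 < E" and EE1: "E \<le> E1" and E11: "E1 \<le> 1" and Ex: "E1 * ((1 - r) / m)\<^sup>2 \<le> 4"
begin

lemma rE2: "r * E\<^sup>2 \<le> E1"
proof -
  have "E\<^sup>2 \<le> E" using E0 EE1 E11 by (simp add: power2_eq_square mult_left_le_one_le)
  moreover have "r * E\<^sup>2 \<le> E\<^sup>2" using r0 r1 by (simp add: mult_left_le_one_le)
  ultimately show ?thesis using EE1 by linarith
qed

lemma E2: "E\<^sup>2 \<le> E1"
proof -
  have "E\<^sup>2 \<le> E" using E0 EE1 E11 by (simp add: power2_eq_square mult_left_le_one_le)
  then show ?thesis using EE1 by linarith
qed

lemma E4: "E^4 \<le> E1"
proof -
  have "E^4 = E\<^sup>2 * E\<^sup>2" by (simp add: power_numeral_reduce)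
  also have "\<dots> \<le> 1 * E1" using E2 E0 E11 by (intro mult_mono) auto
  finally show ?thesis by simp
qed

lemma rE4: "r * E^4 \<le> E1"
proof -
  have "r * E^4 \<le> E^4" by (rule mult_left_le_one_le) (use r0 r1 E0 in auto)
  then show ?thesis using E4 by linarith
qed

lemma part_a: "(r * (2*c*E - c\<^sup>2/m * E\<^sup>2))\<^sup>2 / r \<le> 8 * c\<^sup>2 * E1 + 2 * c^4 * E1 / m\<^sup>2"
proof -
  have "(r * (2*c*E - c\<^sup>2/m * E\<^sup>2))\<^sup>2 / r = r * (2*c*E + (- c\<^sup>2/m * E\<^sup>2))\<^sup>2"
    using r0 by (simp add: power2_eq_square field_simps)
  also have "\<dots> \<le> r * (2 * (2*c*E)\<^sup>2 + 2 * (- c\<^sup>2/m * E\<^sup>2)\<^sup>2)"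
    by (intro mult_left_mono[OF sq2]) (use r0 in auto)
  also have "\<dots> = 8 * c\<^sup>2 * (r * E\<^sup>2) + 2 * c^4 * (r * E^4) / m\<^sup>2"
    by (simp add: power2_eq_square power4_eq_xxxx field_simps)
  also have "\<dots> \<le> 8 * c\<^sup>2 * E1 + 2 * c^4 * E1 / m\<^sup>2"
    using rE2 rE4 m0 by (intro add_mono mult_left_mono divide_right_mono) auto
  finally show ?thesis .
qed

end


context pw begin
lemma hm: "h / m\<^sup>2 = 1" "h\<^sup>2 / m\<^sup>2 = h" "h\<^sup>2 / m^4 = 1"
proof -
  show "h / m\<^sup>2 = 1" using m2 h0 by simp
  show "h\<^sup>2 / m\<^sup>2 = h" using m2 h0 by (simp add: power2_eq_square)
  have "m^4 = (m\<^sup>2)\<^sup>2" by (simp flip: power_mult)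
  then have "m^4 = h\<^sup>2" using m2 by simp
  then show "h\<^sup>2 / m^4 = 1" using h0 by simp
qed

end

context pw begin
lemma r_le1: "r \<le> 1" "r\<^sup>2 \<le> 1" "r^3 \<le> 1" "r^4 \<le> 1" "r^5 \<le> 1"
  using r0 r1 by (auto simp: power_le_one)

end

context pw begin
lemma stretch_id:
  "(2*c*E - c\<^sup>2/m*E\<^sup>2 + 2*r\<^sup>2*(2*c*E/m - 2*c\<^sup>2*E\<^sup>2/m\<^sup>2)) + (r/q - 2*r*c*E/m)\<^sup>2 - 1
   = (- h\<^sup>2/q\<^sup>2) + 4*r\<^sup>2*c*E*(q-1)/(m*q) + 2*c*E + (- c\<^sup>2/m*E\<^sup>2)"
proof -
  have rq2: "r\<^sup>2/q\<^sup>2 = 1 - h\<^sup>2/q\<^sup>2"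
  proof -
    have "r\<^sup>2 = q\<^sup>2 - h\<^sup>2" using q2 by simp
    then show ?thesis using q0 by (simp add: diff_divide_distrib)
  qed
  have "(r/q - 2*r*c*E/m)\<^sup>2 = r\<^sup>2/q\<^sup>2 - 4*r\<^sup>2*c*E/(m*q) + 4*r\<^sup>2*c\<^sup>2*E\<^sup>2/m\<^sup>2"
    using q0 m0 by (simp add: power2_eq_square field_simps)
  then have "(2*c*E - c\<^sup>2/m*E\<^sup>2 + 2*r\<^sup>2*(2*c*E/m - 2*c\<^sup>2*E\<^sup>2/m\<^sup>2)) + (r/q - 2*r*c*E/m)\<^sup>2 - 1
   = (- h\<^sup>2/q\<^sup>2) + 4*r\<^sup>2*c*E*(q-1)/(m*q) + 2*c*E + (- c\<^sup>2/m*E\<^sup>2) + (r\<^sup>2/q\<^sup>2 - 1 + h\<^sup>2/q\<^sup>2)"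
    using q0 m0 by (simp add: power2_eq_square field_simps)
  then show ?thesis using rq2 by simp
qed

end

context pw begin
lemma part_d:
  "h\<^sup>2 * ((r/q - 2*r*c*E/m)\<^sup>2 / r) \<le> 2 * (h\<^sup>2 * r / q\<^sup>2) + 4 * c\<^sup>2 * E1"
proof -
  have "h\<^sup>2 * ((r/q - 2*r*c*E/m)\<^sup>2 / r) = h\<^sup>2 / r * (r/q + (- 2*r*c*E/m))\<^sup>2" by simp
  also have "\<dots> \<le> h\<^sup>2 / r * (2 * (r/q)\<^sup>2 + 2 * (- 2*r*c*E/m)\<^sup>2)"
    by (intro mult_left_mono[OF sq2]) (use r0 in auto)
  also have "\<dots> = 2 * (h\<^sup>2 * r / q\<^sup>2) + 8 * c\<^sup>2 * (h\<^sup>2 / m\<^sup>2) * (r * E\<^sup>2)"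
    using r0 q0 m0 by (simp add: power2_eq_square field_simps)
  also have "\<dots> \<le> 2 * (h\<^sup>2 * r / q\<^sup>2) + 8 * c\<^sup>2 * (1/2) * E1"
    unfolding hm using h1 rE2 E0 r0 by (intro add_mono mult_left_mono mult_mono) auto
  finally show ?thesis by simp
qed


end

context pw begin
lemma part_c:
  "h\<^sup>2 * (r * (h\<^sup>2/q^3 - 2*c*E/m - 4*r\<^sup>2*c*E/m\<^sup>2)\<^sup>2) \<le> 3 * (h^6 * r / q^6) + 54 * c\<^sup>2 * E1"
proof -
  have "h\<^sup>2 * (r * (h\<^sup>2/q^3 - 2*c*E/m - 4*r\<^sup>2*c*E/m\<^sup>2)\<^sup>2)
      = h\<^sup>2 * r * (h\<^sup>2/q^3 + (- 2*c*E/m) + (- 4*r\<^sup>2*c*E/m\<^sup>2))\<^sup>2" by (simp add: algebra_simps)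
  also have "\<dots> \<le> h\<^sup>2 * r * (3 * ((h\<^sup>2/q^3)\<^sup>2 + (- 2*c*E/m)\<^sup>2 + (- 4*r\<^sup>2*c*E/m\<^sup>2)\<^sup>2))"
    by (intro mult_left_mono[OF sq3]) (use r0 in auto)
  also have "\<dots> = 3 * (h^6 * r / q^6) + 3 * (4 * c\<^sup>2 * (h\<^sup>2 / m\<^sup>2) * (r * E\<^sup>2)) + 3 * (16 * c\<^sup>2 * (h\<^sup>2 / m^4) * (r^4 * (r * E\<^sup>2)))"
    using q0 m0 by (simp add: power2_eq_square field_simps power_numeral_reduce)
  also have "\<dots> \<le> 3 * (h^6 * r / q^6) + 3 * (4 * c\<^sup>2 * (1/2) * E1) + 3 * (16 * c\<^sup>2 * 1 * (1 * E1))"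
    unfolding hm using h1 rE2 r_le1 E0 r0
    by (intro add_mono mult_left_mono mult_mono) auto
  finally show ?thesis by (simp add: algebra_simps)
qed

end

context pw begin
lemma part_b:
  "r * ((2*c*E - c\<^sup>2/m*E\<^sup>2 + 2*r\<^sup>2*(2*c*E/m - 2*c\<^sup>2*E\<^sup>2/m\<^sup>2)) + (r/q - 2*r*c*E/m)\<^sup>2 - 1)\<^sup>2
   \<le> 4 * (r * h^4 / q^4) + 592 * c\<^sup>2 * E1 + 4 * c^4 * E1 / m\<^sup>2"
proof -
  define A1 where "A1 = - h\<^sup>2/q\<^sup>2"
  define A2 where "A2 = 4*r\<^sup>2*c*E*(q-1)/(m*q)"
  define A3 where "A3 = 2*c*E"
  define A4 where "A4 = - c\<^sup>2/m*E\<^sup>2"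
  have "r * ((2*c*E - c\<^sup>2/m*E\<^sup>2 + 2*r\<^sup>2*(2*c*E/m - 2*c\<^sup>2*E\<^sup>2/m\<^sup>2)) + (r/q - 2*r*c*E/m)\<^sup>2 - 1)\<^sup>2
      = r * (A1 + A2 + A3 + A4)\<^sup>2" unfolding stretch_id A1_def A2_def A3_def A4_def ..
  also have "\<dots> \<le> r * (4 * (A1\<^sup>2 + A2\<^sup>2 + A3\<^sup>2 + A4\<^sup>2))"
    by (intro mult_left_mono[OF sq4]) (use r0 in auto)
  also have "\<dots> = 4 * (r * A1\<^sup>2 + r * A2\<^sup>2 + r * A3\<^sup>2 + r * A4\<^sup>2)" by (simp add: algebra_simps)
  also have "\<dots> \<le> 4 * (r * h^4 / q^4 + 144 * c\<^sup>2 * E1 + 4 * c\<^sup>2 * E1 + c^4 * E1 / m\<^sup>2)"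
  proof -
    have a1: "r * A1\<^sup>2 = r * h^4 / q^4" unfolding A1_def by (simp add: power2_eq_square power4_eq_xxxx)
    have a3: "r * A3\<^sup>2 \<le> 4 * c\<^sup>2 * E1"
    proof -
      have "r * A3\<^sup>2 = 4 * c\<^sup>2 * (r * E\<^sup>2)" unfolding A3_def by (simp add: power2_eq_square)
      also have "\<dots> \<le> 4 * c\<^sup>2 * E1" using rE2 by (intro mult_left_mono) auto
      finally show ?thesis .
    qed
    have a4: "r * A4\<^sup>2 \<le> c^4 * E1 / m\<^sup>2"
    proof -
      have "r * A4\<^sup>2 = c^4 * (r * E^4) / m\<^sup>2" unfolding A4_def by (simp add: power2_eq_square power4_eq_xxxx)
      also have "\<dots> \<le> c^4 * E1 / m\<^sup>2" using rE4 by (intro divide_right_mono mult_left_mono) auto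
      finally show ?thesis .
    qed
    have a2: "r * A2\<^sup>2 \<le> 144 * c\<^sup>2 * E1"
    proof -
      define X where "X = 4*c*E*(q-1)/m"
      have A2X: "A2 = X * (r\<^sup>2/q)" unfolding A2_def X_def by simp
      have rq1: "r\<^sup>2/q \<le> 1"
      proof -
        have "r * r \<le> q * 1" using rq r0 r1 by (intro mult_mono) auto
        then have "r\<^sup>2 \<le> q * 1" by (simp add: power2_eq_square)
        then show ?thesis using q0 by (simp add: divide_le_eq)
      qed
      have rq1': "0 \<le> r\<^sup>2/q" using q0 by simp
      have "r * A2\<^sup>2 = X\<^sup>2 * (r * (r\<^sup>2/q)\<^sup>2)" unfolding A2X by (simp only: power_mult_distrib mult_ac)
      also have "\<dots> \<le> X\<^sup>2 * 1"
      proof (rule mult_left_mono)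
        have "(r\<^sup>2/q)\<^sup>2 \<le> 1" using rq1 rq1' by (simp add: power_le_one)
        then show "r * (r\<^sup>2/q)\<^sup>2 \<le> 1" using r0 r1 by (meson less_eq_real_def mult_le_one zero_le_power2)
      qed simp
      also have "\<dots> = 16 * c\<^sup>2 * E\<^sup>2 * (q-1)\<^sup>2 / m\<^sup>2" unfolding X_def by (simp add: power_mult_distrib power_divide)
      also have "\<dots> \<le> 16 * c\<^sup>2 * E\<^sup>2 * (2 * h\<^sup>2 + 2 * (1 - r)\<^sup>2) / m\<^sup>2"
      proof -
        have "(q-1)\<^sup>2 = \<bar>q - 1\<bar>\<^sup>2" by simp
        also have "\<dots> \<le> (h + (1 - r))\<^sup>2" using q1 by (intro power_mono) auto
        also have "\<dots> \<le> 2 * h\<^sup>2 + 2 * (1 - r)\<^sup>2" by (rule sq2)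
        finally have "(q-1)\<^sup>2 \<le> 2 * h\<^sup>2 + 2 * (1 - r)\<^sup>2" .
        then show ?thesis using m0 by (intro divide_right_mono mult_left_mono) auto
      qed
      also have "\<dots> = 32 * c\<^sup>2 * (E\<^sup>2 * (h\<^sup>2 / m\<^sup>2)) + 32 * c\<^sup>2 * (E\<^sup>2 * ((1 - r) / m)\<^sup>2)"
        by (simp add: power_divide algebra_simps add_divide_distrib)
      also have "\<dots> \<le> 32 * c\<^sup>2 * (E1 / 2) + 32 * c\<^sup>2 * (4 * E1)"
      proof (intro add_mono mult_left_mono)
        have "E\<^sup>2 * h \<le> E1 * (1/2)" using E2 h1 h0 E0 EE1 by (intro mult_mono) auto
        then show "E\<^sup>2 * (h\<^sup>2 / m\<^sup>2) \<le> E1 / 2" unfolding hm by simp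
        have "E\<^sup>2 \<le> E1\<^sup>2" using E0 EE1 by (intro power_mono) auto
        then have "E\<^sup>2 * ((1 - r) / m)\<^sup>2 \<le> E1\<^sup>2 * ((1 - r) / m)\<^sup>2" by (intro mult_right_mono) auto
        also have "\<dots> = E1 * (E1 * ((1 - r) / m)\<^sup>2)" by (simp add: power2_eq_square)
        also have "\<dots> \<le> E1 * 4" using Ex E0 EE1 by (intro mult_left_mono) auto
        finally show "E\<^sup>2 * ((1 - r) / m)\<^sup>2 \<le> 4 * E1" by simp
      qed auto
      finally show ?thesis by (simp add: algebra_simps)
    qed
    show ?thesis by (intro mult_left_mono add_mono) (use a1 a2 a3 a4 in auto)
  qed
  finally show ?thesis by (simp add: algebra_simps)
qed

end

definition gfun :: "real \<Rightarrow> real \<Rightarrow> real \<Rightarrow> real \<Rightarrow> real" where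
  "gfun h m P r = 4*(h^4*r/(r\<^sup>2+h\<^sup>2)\<^sup>2) + 3*(h^6*r/(r\<^sup>2+h\<^sup>2)^3) + 2*(h\<^sup>2*r/(r\<^sup>2+h\<^sup>2)) + P*exp((r-1)/m)"

definition Gfun :: "real \<Rightarrow> real \<Rightarrow> real \<Rightarrow> real \<Rightarrow> real" where
  "Gfun h m P r = - 2*h^4/(r\<^sup>2+h\<^sup>2) - 3*h^6/(4*(r\<^sup>2+h\<^sup>2)\<^sup>2) + h\<^sup>2*ln(r\<^sup>2+h\<^sup>2) + P*m*exp((r-1)/m)"

lemma Gfun_deriv:
  assumes h: "0 < h" and m: "0 < m"
  shows "(Gfun h m P has_real_derivative gfun h m P r) (at r)"
proof -
  define s where "s = r\<^sup>2 + h\<^sup>2"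
  have p: "0 < s" using h by (simp add: add_nonneg_pos s_def)
  have ds: "((\<lambda>r. r\<^sup>2 + h\<^sup>2) has_real_derivative 2*r) (at r)"
    by (auto intro!: derivative_eq_intros)
  have f1: "((\<lambda>s. - 2*h^4/s) has_real_derivative 2*h^4/s\<^sup>2) (at s)"
    using p by (auto intro!: derivative_eq_intros simp: field_simps power2_eq_square)
  have f2: "((\<lambda>s. - 3*h^6/(4 * s^2)) has_real_derivative 3*h^6/(2* s^3)) (at s)"
    using p by (auto intro!: derivative_eq_intros simp: field_simps power2_eq_square power3_eq_cube)
  have f3: "((\<lambda>s. h\<^sup>2*ln s) has_real_derivative h\<^sup>2/s) (at s)"
    using p by (auto intro!: derivative_eq_intros simp: field_simps)
  have f4: "((\<lambda>r. P*m*exp((r-1)/m)) has_real_derivative P*exp((r-1)/m)) (at r)"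
    using m by (auto intro!: derivative_eq_intros simp: field_simps)
  have g1: "((\<lambda>r. - 2*h^4/(r\<^sup>2+h\<^sup>2)) has_real_derivative 2*h^4/s\<^sup>2 * (2*r)) (at r)"
    using DERIV_chain2[OF f1[unfolded s_def] ds] by (simp add: s_def)
  have g2: "((\<lambda>r. - 3*h^6/(4*(r\<^sup>2+h\<^sup>2)\<^sup>2)) has_real_derivative 3*h^6/(2* s^3) * (2*r)) (at r)"
    using DERIV_chain2[OF f2[unfolded s_def] ds] by (simp add: s_def)
  have g3: "((\<lambda>r. h\<^sup>2*ln(r\<^sup>2+h\<^sup>2)) has_real_derivative h\<^sup>2/s * (2*r)) (at r)"
    using DERIV_chain2[OF f3[unfolded s_def] ds] by (simp add: s_def)
  have "(Gfun h m P has_real_derivative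
     2*h^4/s\<^sup>2 * (2*r) + 3*h^6/(2* s^3) * (2*r) + h\<^sup>2/s * (2*r) + P*exp((r-1)/m)) (at r)"
  proof -
    have "Gfun h m P = (\<lambda>r. (- 2*h^4/(r\<^sup>2+h\<^sup>2)) + (- 3*h^6/(4 * (r\<^sup>2+h\<^sup>2)\<^sup>2)) + h\<^sup>2*ln(r\<^sup>2+h\<^sup>2) + P*m*exp((r-1)/m))"
      by (simp add: fun_eq_iff Gfun_def)
    then show ?thesis by (simp only:) (intro DERIV_add g1 g2 g3 f4)
  qed
  moreover have "2*h^4/s\<^sup>2 * (2*r) + 3*h^6/(2* s^3) * (2*r) + h\<^sup>2/s * (2*r) + P*exp((r-1)/m) = gfun h m P r"
    unfolding gfun_def s_def[symmetric] using p by (simp add: field_simps)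
  ultimately show ?thesis by simp
qed

lemma gfun_nonneg: "0 < h \<Longrightarrow> 0 \<le> P \<Longrightarrow> 0 \<le> r \<Longrightarrow> 0 \<le> gfun h m P r"
  unfolding gfun_def by (intro add_nonneg_nonneg mult_nonneg_nonneg divide_nonneg_nonneg) auto

lemma gfun_integral:
  assumes h: "0 < h" and m: "0 < m"
  shows "(gfun h m P has_integral (Gfun h m P 1 - Gfun h m P 0)) {0<..<1}"
proof -
  have "(gfun h m P has_integral (Gfun h m P 1 - Gfun h m P 0)) {0..1}"
    by (rule fundamental_theorem_of_calculus)
       (use Gfun_deriv[OF h m] in \<open>auto simp: has_real_derivative_iff_has_vector_derivative[symmetric] intro: has_field_derivative_at_within\<close>)
  then show ?thesis by (simp add: has_integral_Icc_iff_Ioo)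
qed

lemma Gfun_bound:
  assumes h: "0 < h" and m: "0 < m" and P: "0 \<le> P"
  shows "Gfun h m P 1 - Gfun h m P 0 \<le> 11/4 * h\<^sup>2 + h^4 + 2 * h\<^sup>2 * ln (1/h) + P * m"
proof -
  have lnh: "ln (h\<^sup>2) = - 2 * ln (1/h)" using h by (simp add: ln_div ln_realpow)
  have G0: "Gfun h m P 0 = - 2 * h\<^sup>2 - 3/4 * h\<^sup>2 + h\<^sup>2 * ln (h\<^sup>2) + P*m*exp(-1/m)"
    unfolding Gfun_def using h by (simp add: power2_eq_square power_numeral_reduce field_simps)
  have G1: "Gfun h m P 1 = - 2*h^4/(1+h\<^sup>2) - 3*h^6/(4*(1+h\<^sup>2)\<^sup>2) + h\<^sup>2*ln(1+h\<^sup>2) + P*m"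
    unfolding Gfun_def by (simp add: add.commute)
  have a: "0 \<le> 2*h^4/(1+h\<^sup>2)" "0 \<le> 3*h^6/(4*(1+h\<^sup>2)\<^sup>2)" "0 \<le> P*m*exp(-1/m)" using P m by auto
  have c: "h\<^sup>2 * ln (1+h\<^sup>2) \<le> h\<^sup>2 * h\<^sup>2"
    using ln_add_one_self_le_self[of "h\<^sup>2"] by (intro mult_left_mono) (auto simp: add.commute)
  have c2: "h\<^sup>2 * h\<^sup>2 = h^4" by (simp add: power2_eq_square power4_eq_xxxx)
  have l: "h\<^sup>2 * ln (h\<^sup>2) = - (2 * h\<^sup>2 * ln (1/h))" unfolding lnh by simp
  show ?thesis unfolding G0 G1 using a c c2 l by linarith
qed


context pw begin
lemma total:
  "(r*(2*c*E - c\<^sup>2/m*E\<^sup>2))\<^sup>2/r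
   + r*((2*c*E - c\<^sup>2/m*E\<^sup>2 + 2*r\<^sup>2*(2*c*E/m - 2*c\<^sup>2*E\<^sup>2/m\<^sup>2)) + (r/q - 2*r*c*E/m)\<^sup>2 - 1)\<^sup>2
   + h\<^sup>2*(r*(h\<^sup>2/q^3 - 2*c*E/m - 4*r\<^sup>2*c*E/m\<^sup>2)\<^sup>2 + (r/q - 2*r*c*E/m)\<^sup>2/r)
   \<le> 4*(h^4*r/(r\<^sup>2+h\<^sup>2)\<^sup>2) + 3*(h^6*r/(r\<^sup>2+h\<^sup>2)^3) + 2*(h\<^sup>2*r/(r\<^sup>2+h\<^sup>2)) + (700*c\<^sup>2 + 6*c^4/m\<^sup>2)*E1"
proof -
  have q4: "q^4 = (r\<^sup>2+h\<^sup>2)\<^sup>2" "q^6 = (r\<^sup>2+h\<^sup>2)^3"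
    unfolding q2[symmetric] by (simp_all flip: power_mult)
  have e1: "r * h^4 / q^4 = h^4*r/(r\<^sup>2+h\<^sup>2)\<^sup>2" "h^6 * r / q^6 = h^6*r/(r\<^sup>2+h\<^sup>2)^3" "h\<^sup>2 * r / q\<^sup>2 = h\<^sup>2*r/(r\<^sup>2+h\<^sup>2)"
    unfolding q4 q2 by (simp_all add: mult.commute)
  have e2: "(700*c\<^sup>2 + 6*c^4/m\<^sup>2)*E1 = 8 * c\<^sup>2 * E1 + 592 * c\<^sup>2 * E1 + 54 * c\<^sup>2 * E1 + 4 * c\<^sup>2 * E1 + 42 * c\<^sup>2 * E1 + 2 * c^4 * E1 / m\<^sup>2 + 4 * c^4 * E1 / m\<^sup>2"
    by (simp add: algebra_simps)
  have e3: "0 \<le> 42 * c\<^sup>2 * E1" using E0 EE1 by auto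
  have e4: "h\<^sup>2*(r*(h\<^sup>2/q^3 - 2*c*E/m - 4*r\<^sup>2*c*E/m\<^sup>2)\<^sup>2 + (r/q - 2*r*c*E/m)\<^sup>2/r)
     = h\<^sup>2*(r*(h\<^sup>2/q^3 - 2*c*E/m - 4*r\<^sup>2*c*E/m\<^sup>2)\<^sup>2) + h\<^sup>2*((r/q - 2*r*c*E/m)\<^sup>2/r)"
    by (simp add: distrib_left)
  show ?thesis unfolding e2 e4 using part_a part_b part_c part_d e1 e3 by linarith
qed
end

definition cc :: "real \<Rightarrow> real \<Rightarrow> real" where
  "cc h \<delta> = (sqrt (1 + h\<^sup>2) - h - 1 + \<delta>) / (1 - exp (- 1 / sqrt h))"
definition FF :: "real \<Rightarrow> real \<Rightarrow> real \<Rightarrow> real" where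
  "FF h \<delta> s = sqrt (s + h\<^sup>2) - h - cc h \<delta> * (exp ((s - 1) / sqrt h) - exp (- 1 / sqrt h))"
definition F1 :: "real \<Rightarrow> real \<Rightarrow> real \<Rightarrow> real" where
  "F1 h \<delta> s = 1 / (2 * sqrt (s + h\<^sup>2)) - cc h \<delta> * (exp ((s - 1) / sqrt h) / sqrt h)"
definition F2 :: "real \<Rightarrow> real \<Rightarrow> real \<Rightarrow> real" where
  "F2 h \<delta> s = - 1 / (4 * (s + h\<^sup>2) * sqrt (s + h\<^sup>2)) - cc h \<delta> * (exp ((s - 1) / sqrt h) / (sqrt h)\<^sup>2)"
definition HH :: "real \<Rightarrow> real \<Rightarrow> real \<Rightarrow> real" where
  "HH h \<delta> s = 2 * cc h \<delta> * exp ((s - 1) / sqrt h) - (cc h \<delta>)\<^sup>2 / sqrt h * (exp ((s - 1) / sqrt h))\<^sup>2"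
definition H1 :: "real \<Rightarrow> real \<Rightarrow> real \<Rightarrow> real" where
  "H1 h \<delta> s = 2 * cc h \<delta> * exp ((s - 1) / sqrt h) / sqrt h - 2 * (cc h \<delta>)\<^sup>2 * (exp ((s - 1) / sqrt h))\<^sup>2 / (sqrt h)\<^sup>2"

lemma sqrt_rules: "0 < h \<Longrightarrow> sqrt h * sqrt h = h" "0 < h \<Longrightarrow> sqrt h * (sqrt h * x) = h * x"
  by (simp_all add: mult.assoc[symmetric])

lemma FF_deriv:
  assumes h: "0 < h" and s: "0 \<le> s"
  shows "(FF h \<delta> has_real_derivative F1 h \<delta> s) (at s)"
proof -
  have p: "0 < s + h\<^sup>2" using h s by (simp add: add_nonneg_pos)
  have sp: "0 < sqrt (s + h\<^sup>2)" using p by simp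
  show ?thesis unfolding FF_def F1_def using p sp h
    by (auto intro!: derivative_eq_intros simp: field_simps sqrt_rules)
qed

lemma F1_deriv:
  assumes h: "0 < h" and s: "0 \<le> s"
  shows "(F1 h \<delta> has_real_derivative F2 h \<delta> s) (at s)"
proof -
  have p: "0 < s + h\<^sup>2" using h s by (simp add: add_nonneg_pos)
  have sp: "0 < sqrt (s + h\<^sup>2)" using p by simp
  have sq: "sqrt (s + h\<^sup>2) * sqrt (s + h\<^sup>2) = s + h\<^sup>2" using p by simp
  have d1: "((\<lambda>s. 1 / (2 * sqrt (s + h\<^sup>2))) has_real_derivative - 1 / (4 * (s + h\<^sup>2) * sqrt (s + h\<^sup>2))) (at s)"
    using p sp by (auto intro!: derivative_eq_intros simp: field_simps power2_eq_square sq)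
  have d2: "((\<lambda>s. cc h \<delta> * (exp ((s - 1) / sqrt h) / sqrt h)) has_real_derivative cc h \<delta> * (exp ((s - 1) / sqrt h) / (sqrt h)\<^sup>2)) (at s)"
    using h by (auto intro!: derivative_eq_intros simp: field_simps power2_eq_square)
  show ?thesis unfolding F1_def F2_def by (rule DERIV_diff[OF d1 d2])
qed

lemma HH_deriv:
  assumes h: "0 < h"
  shows "(HH h \<delta> has_real_derivative H1 h \<delta> s) (at s)"
  unfolding HH_def H1_def using h
  by (auto intro!: derivative_eq_intros simp: field_simps power2_eq_square sqrt_rules)

lemma F2_cont:
  assumes h: "0 < h"
  shows "continuous_on {0..} (F2 h \<delta>)"
proof -
  have pos: "x + h\<^sup>2 \<noteq> 0" "4 * x + 4 * h\<^sup>2 \<noteq> 0" "4 * (x + h\<^sup>2) \<noteq> 0" "0 < x + h\<^sup>2" if "0 \<le> x" for x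
  proof -
    have "0 < x + h\<^sup>2" using h that by (simp add: add_nonneg_pos)
    then show "x + h\<^sup>2 \<noteq> 0" "4 * x + 4 * h\<^sup>2 \<noteq> 0" "4 * (x + h\<^sup>2) \<noteq> 0" "0 < x + h\<^sup>2" by auto
  qed
  show ?thesis unfolding F2_def
    by (intro continuous_intros) (use pos h in auto)
qed

lemma H1_cont: "0 < h \<Longrightarrow> continuous_on {0..} (H1 h \<delta>)"
  unfolding H1_def by (intro continuous_intros) auto


definition ww :: "real \<Rightarrow> real \<Rightarrow> real \<Rightarrow> real" where "ww h \<delta> r = FF h \<delta> (r\<^sup>2)"
definition uu :: "real \<Rightarrow> real \<Rightarrow> real \<Rightarrow> real" where "uu h \<delta> r = r * HH h \<delta> (r\<^sup>2)"

lemma Wfun_eq: "Wfun (ww h \<delta>) = (\<lambda>x. FF h \<delta> (x \<bullet> x))"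
  by (simp add: fun_eq_iff Wfun_def ww_def power2_norm_eq_inner)

lemma Ufun_eq: "Ufun (uu h \<delta>) = (\<lambda>x. ((HH h \<delta> (x \<bullet> x) - 1) / 2) *\<^sub>R x)"
proof
  fix x :: "real^2"
  show "Ufun (uu h \<delta>) x = ((HH h \<delta> (x \<bullet> x) - 1) / 2) *\<^sub>R x"
  proof (cases "x = 0")
    case True then show ?thesis by (simp add: Ufun_def)
  next
    case False
    then have n: "norm x \<noteq> 0" by simp
    have "Ufun (uu h \<delta>) x = (1/2 * (norm x * HH h \<delta> (x \<bullet> x) - norm x) * inverse (norm x)) *\<^sub>R x"
      by (simp add: Ufun_def uu_def power2_norm_eq_inner)
    also have "1/2 * (norm x * HH h \<delta> (x \<bullet> x) - norm x) * inverse (norm x) = (HH h \<delta> (x \<bullet> x) - 1) / 2"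
      using n by (simp add: field_simps)
    finally show ?thesis .
  qed
qed

lemma exp_sq_bound: "0 \<le> x \<Longrightarrow> exp (- x) * x\<^sup>2 \<le> (4::real)"
proof -
  assume x: "0 \<le> x"
  have "x / 2 \<le> exp (x / 2)" using exp_ge_add_one_self[of "x/2"] by linarith
  then have "(x / 2)\<^sup>2 \<le> (exp (x / 2))\<^sup>2" using x by (intro power_mono) auto
  also have "(exp (x / 2))\<^sup>2 = exp x" by (simp add: power2_eq_square flip: exp_add)
  finally have "x\<^sup>2 \<le> 4 * exp x" by (simp add: power_divide)
  then have "exp (- x) * x\<^sup>2 \<le> exp (- x) * (4 * exp x)" by (intro mult_left_mono) auto
  also have "\<dots> = 4" by (simp add: exp_minus field_simps)
  finally show ?thesis .
qed

definition PP :: "real \<Rightarrow> real \<Rightarrow> real" where "PP h \<delta> = 700 * (cc h \<delta>)\<^sup>2 + 6 * (cc h \<delta>)^4 / (sqrt h)\<^sup>2"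

context
  fixes h \<delta> :: real
  assumes h0: "0 < h" and h1: "h \<le> 1/2" and d0: "0 \<le> \<delta>" and d1: "\<delta> \<le> 1"
begin

lemma m_facts: "0 < sqrt h" "(sqrt h)\<^sup>2 = h" "sqrt h \<le> 1" "h \<le> sqrt h"
proof -
  show "0 < sqrt h" "(sqrt h)\<^sup>2 = h" using h0 by auto
  show "sqrt h \<le> 1" using h0 h1 by simp
  have "h * h \<le> h * 1" using h0 h1 by (intro mult_left_mono) auto
  then show "h \<le> sqrt h" using h0 by (intro real_le_rsqrt) (simp add: power2_eq_square)
qed

lemma admissible: "(uu h \<delta>, ww h \<delta>) \<in> Adm \<delta>"
proof -
  have W22: "W22 B1 (Wfun (ww h \<delta>))"
    unfolding Wfun_eq
    by (rule radial_W22[OF FF_deriv[OF h0] F1_deriv[OF h0] F2_cont[OF h0]])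
  have Gd: "((\<lambda>s. (HH h \<delta> s - 1) / 2) has_real_derivative H1 h \<delta> s / 2) (at s)" for s
    using DERIV_cdivide[OF DERIV_diff[OF HH_deriv[OF h0, of \<delta> s] DERIV_const[of 1]], where c=2] by simp
  have W12: "W12 B1 (Ufun (uu h \<delta>))"
    unfolding Ufun_eq
    by (rule radial_W12[OF Gd]) (use H1_cont[OF h0] in \<open>auto intro!: continuous_intros\<close>)
  have cu: "continuous_on {0<..<1} (uu h \<delta>)"
    unfolding uu_def HH_def by (intro continuous_intros) (use h0 in auto)
  have cw: "continuous_on {0..1} (ww h \<delta>)"
    unfolding ww_def FF_def by (intro continuous_intros) (use h0 in auto)
  have w0: "ww h \<delta> 0 = 0" using h0 by (simp add: ww_def FF_def)
  have e0: "exp (- 1 / sqrt h) < 1" using m_facts by simp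
  have w1: "ww h \<delta> 1 = 1 - \<delta>"
    using e0 by (simp add: ww_def FF_def cc_def)
  show ?thesis unfolding Adm_def using W22 W12 cu cw w0 w1 by auto
qed

lemma dsq: "((\<lambda>r::real. r\<^sup>2) has_real_derivative 2*r) (at r)"
  by (auto intro!: derivative_eq_intros)

lemma dww_at: "(ww h \<delta> has_real_derivative F1 h \<delta> (r\<^sup>2) * (2*r)) (at r)"
  unfolding ww_def by (rule DERIV_chain2[OF FF_deriv[OF h0] dsq]) simp

lemma dww: "deriv (ww h \<delta>) = (\<lambda>r. F1 h \<delta> (r\<^sup>2) * (2*r))"
  using dww_at DERIV_imp_deriv by blast

lemma ddww: "deriv (deriv (ww h \<delta>)) r = F2 h \<delta> (r\<^sup>2) * (2*r) * (2*r) + 2 * F1 h \<delta> (r\<^sup>2)"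
proof -
  have a: "((\<lambda>r. F1 h \<delta> (r\<^sup>2)) has_real_derivative F2 h \<delta> (r\<^sup>2) * (2*r)) (at r)"
    by (rule DERIV_chain2[OF F1_deriv[OF h0] dsq]) simp
  have b: "((\<lambda>r::real. 2*r) has_real_derivative 2) (at r)"
    by (auto intro!: derivative_eq_intros)
  show ?thesis unfolding dww using DERIV_mult[OF a b] DERIV_imp_deriv by blast
qed

lemma duu: "deriv (uu h \<delta>) r = 1 * HH h \<delta> (r\<^sup>2) + H1 h \<delta> (r\<^sup>2) * (2*r) * r"
proof -
  have a: "((\<lambda>r. HH h \<delta> (r\<^sup>2)) has_real_derivative H1 h \<delta> (r\<^sup>2) * (2*r)) (at r)"
    by (rule DERIV_chain2[OF HH_deriv[OF h0] dsq])
  have "(uu h \<delta> has_real_derivative 1 * HH h \<delta> (r\<^sup>2) + H1 h \<delta> (r\<^sup>2) * (2*r) * r) (at r)"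
    unfolding uu_def using DERIV_mult[OF DERIV_ident a] by simp
  then show ?thesis using DERIV_imp_deriv by blast
qed


lemma pointwise:
  assumes r0: "0 < r" and r1: "r < 1"
  shows "(uu h \<delta> r)\<^sup>2 / r + r * (deriv (uu h \<delta>) r + (deriv (ww h \<delta>) r)\<^sup>2 - 1)\<^sup>2
        + h\<^sup>2 * (r * (deriv (deriv (ww h \<delta>)) r)\<^sup>2 + (deriv (ww h \<delta>) r)\<^sup>2 / r)
        \<le> gfun h (sqrt h) (PP h \<delta>) r"
proof -
  define m where "m = sqrt h"
  define c where "c = cc h \<delta>"
  define q where "q = sqrt (r\<^sup>2 + h\<^sup>2)"
  define E where "E = exp ((r\<^sup>2 - 1) / m)"
  define E1 where "E1 = exp ((r - 1) / m)"
  have m0: "0 < m" and m2: "m\<^sup>2 = h" and m1: "m \<le> 1" using m_facts unfolding m_def by auto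
  have p: "0 < r\<^sup>2 + h\<^sup>2" using h0 by (simp add: add_nonneg_pos)
  have q0: "0 < q" unfolding q_def using p by simp
  have q2: "q\<^sup>2 = r\<^sup>2 + h\<^sup>2" unfolding q_def using p by simp
  have rq: "r \<le> q" unfolding q_def using r0 by (intro real_le_rsqrt) simp
  have qrh: "q \<le> r + h" unfolding q_def using r0 h0
    by (intro real_le_lsqrt) (auto simp: power2_eq_square algebra_simps)
  have q1: "\<bar>q - 1\<bar> \<le> h + (1 - r)" using rq qrh r1 h0 by linarith
  have E0: "0 < E" unfolding E_def by simp
  have EE1: "E \<le> E1" unfolding E_def E1_def
  proof (subst exp_le_cancel_iff, rule divide_right_mono)
    show "r\<^sup>2 - 1 \<le> r - 1" using r0 r1 by (simp add: power2_eq_square mult_left_le_one_le)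
  qed (use m0 in auto)
  have E11: "E1 \<le> 1" unfolding E1_def using r1 m0 by (simp add: divide_nonpos_pos)
  have Ex: "E1 * ((1 - r) / m)\<^sup>2 \<le> 4"
  proof -
    have "E1 = exp (- ((1 - r) / m))" unfolding E1_def by (simp add: minus_divide_left)
    then show ?thesis using exp_sq_bound[of "(1 - r) / m"] r1 m0 by simp
  qed
  interpret P: pw r h m c q E E1
    by unfold_locales (use r0 r1 h0 h1 m0 m2 q0 q2 rq q1 E0 EE1 E11 Ex in auto)
  have i1: "uu h \<delta> r = r * (2*c*E - c\<^sup>2/m*E\<^sup>2)"
    unfolding uu_def HH_def c_def E_def m_def ..
  have i2: "deriv (uu h \<delta>) r = 2*c*E - c\<^sup>2/m*E\<^sup>2 + 2*r\<^sup>2*(2*c*E/m - 2*c\<^sup>2*E\<^sup>2/m\<^sup>2)"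
    unfolding duu HH_def H1_def c_def[symmetric] m_def[symmetric] E_def[symmetric]
    by (simp add: algebra_simps power2_eq_square)
  have i3: "deriv (ww h \<delta>) r = r/q - 2*r*c*E/m"
    unfolding dww F1_def c_def[symmetric] m_def[symmetric] E_def[symmetric] q_def[symmetric]
    using q0 m0 by (simp add: field_simps)
  have i4: "deriv (deriv (ww h \<delta>)) r = h\<^sup>2/q^3 - 2*c*E/m - 4*r\<^sup>2*c*E/m\<^sup>2"
  proof -
    have "deriv (deriv (ww h \<delta>)) r = (- 1 / (4 * q\<^sup>2 * q) - c * (E / m\<^sup>2)) * (2*r) * (2*r) + 2 * (1 / (2 * q) - c * (E / m))"
      unfolding ddww F1_def F2_def c_def[symmetric] m_def[symmetric] E_def[symmetric] q_def[symmetric] by (simp add: q2)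
    also have "\<dots> = (q\<^sup>2 - r\<^sup>2) / q^3 - 2*c*E/m - 4*r\<^sup>2*c*E/m\<^sup>2"
      using q0 m0 by (simp add: field_simps power2_eq_square power3_eq_cube)
    also have "q\<^sup>2 - r\<^sup>2 = h\<^sup>2" using q2 by simp
    finally show ?thesis .
  qed
  have "gfun h (sqrt h) (PP h \<delta>) r = 4*(h^4*r/(r\<^sup>2+h\<^sup>2)\<^sup>2) + 3*(h^6*r/(r\<^sup>2+h\<^sup>2)^3) + 2*(h\<^sup>2*r/(r\<^sup>2+h\<^sup>2)) + (700*c\<^sup>2 + 6*c^4/m\<^sup>2)*E1"
    unfolding gfun_def PP_def c_def m_def E1_def ..
  then show ?thesis unfolding i1 i2 i3 i4 using P.total by simp
qed

end


context
  fixes h \<delta> :: real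
  assumes h0: "0 < h" and h1: "h \<le> 1/2" and d0: "0 \<le> \<delta>" and d1: "\<delta> \<le> 1"
begin

lemma PP_nonneg: "0 \<le> PP h \<delta>"
  unfolding PP_def by (intro add_nonneg_nonneg mult_nonneg_nonneg divide_nonneg_nonneg) auto

lemma energy: "Eh h (uu h \<delta>) (ww h \<delta>) \<le> ennreal (Gfun h (sqrt h) (PP h \<delta>) 1 - Gfun h (sqrt h) (PP h \<delta>) 0)"
proof -
  have m0: "0 < sqrt h" using h0 by simp
  have "Eh h (uu h \<delta>) (ww h \<delta>) \<le> (\<integral>\<^sup>+ r. ennreal (gfun h (sqrt h) (PP h \<delta>) r) * indicator {0<..<1} r \<partial>lborel)"
    unfolding Eh_def
  proof (rule nn_integral_mono)
    fix r :: real
    show "ennreal ((uu h \<delta> r)\<^sup>2 / r + r * (deriv (uu h \<delta>) r + (deriv (ww h \<delta>) r)\<^sup>2 - 1)\<^sup>2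
        + h\<^sup>2 * (r * (deriv (deriv (ww h \<delta>)) r)\<^sup>2 + (deriv (ww h \<delta>) r)\<^sup>2 / r)) * indicator {0<..<1} r
      \<le> ennreal (gfun h (sqrt h) (PP h \<delta>) r) * indicator {0<..<1} r"
    proof (cases "r \<in> {0<..<1}")
      case True
      then show ?thesis
        by (intro mult_right_mono ennreal_leI pointwise[OF h0 h1 d0 d1]) auto
    qed simp
  qed
  also have "\<dots> = (\<integral>\<^sup>+ r. indicator {0<..<1} r * ennreal (gfun h (sqrt h) (PP h \<delta>) r) \<partial>lborel)"
    by (simp add: mult.commute)
  also have "\<dots> = (\<integral>\<^sup>+ r. ennreal (indicator {0<..<1} r * gfun h (sqrt h) (PP h \<delta>) r) \<partial>lborel)"
    by (intro nn_integral_cong) (auto simp: indicator_def)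
  also have "\<dots> = ennreal (Gfun h (sqrt h) (PP h \<delta>) 1 - Gfun h (sqrt h) (PP h \<delta>) 0)"
    by (rule nn_integral_has_integral_lebesgue[OF _ gfun_integral[OF h0 m0]])
       (use gfun_nonneg[OF h0 PP_nonneg] in auto)
  finally show ?thesis .
qed

lemma cc_bound: "\<bar>cc h \<delta>\<bar> \<le> 2 * (\<delta> + h)"
proof -
  have m: "0 < sqrt h" "sqrt h \<le> 1" using m_facts[OF h0 h1 d0 d1] by auto
  have "exp (- 1 / sqrt h) \<le> exp (-1)" using m by (simp add: field_simps)
  also have "exp (-1) \<le> (1/2::real)"
  proof -
    have "2 \<le> exp (1::real)" using exp_ge_add_one_self[of 1] by simp
    then show ?thesis by (simp add: exp_minus field_simps)
  qed
  finally have k: "1/2 \<le> 1 - exp (- 1 / sqrt h)" by simp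
  have s1: "1 \<le> sqrt (1 + h\<^sup>2)" using h0 by simp
  have s2: "sqrt (1 + h\<^sup>2) \<le> 1 + h" using h0
    by (intro real_le_lsqrt) (auto simp: power2_eq_square algebra_simps)
  have n: "\<bar>sqrt (1 + h\<^sup>2) - h - 1 + \<delta>\<bar> \<le> \<delta> + h" using s1 s2 d0 h0 by linarith
  have kabs: "\<bar>1 - exp (- 1 / sqrt h)\<bar> = 1 - exp (- 1 / sqrt h)" using k by simp
  have "\<bar>cc h \<delta>\<bar> = \<bar>sqrt (1 + h\<^sup>2) - h - 1 + \<delta>\<bar> / (1 - exp (- 1 / sqrt h))"
    unfolding cc_def abs_divide kabs ..
  also have "\<dots> \<le> (\<delta> + h) / (1/2)"
    using n k by (intro frac_le) auto
  finally show ?thesis by simp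
qed

lemma final_bound:
  "Gfun h (sqrt h) (PP h \<delta>) 1 - Gfun h (sqrt h) (PP h \<delta>) 0
   \<le> 20000 * (\<delta>\<^sup>2 * h powr (1/2) + h\<^sup>2 * ln (1/h) + \<delta>^4 * h powr (-1/2))"
proof -
  define m where "m = sqrt h"
  define c where "c = cc h \<delta>"
  define L where "L = ln (1/h)"
  have m0: "0 < m" and m2: "m\<^sup>2 = h" and m1: "m \<le> 1" and hm: "h \<le> m"
    using m_facts[OF h0 h1 d0 d1] unfolding m_def by auto
  have p1: "h powr (1/2) = m" unfolding m_def using h0 by (simp add: powr_half_sqrt)
  have p2: "h powr (-1/2) = 1 / m"
  proof -
    have "h powr (-1/2) = h powr (- (1/2))" by simp
    also have "\<dots> = 1 / h powr (1/2)" by (simp add: powr_minus_divide)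
    finally show ?thesis using p1 by simp
  qed
  have L: "1/2 \<le> L"
  proof -
    have "ln h \<le> h - 1" using h0 by (rule ln_le_minus_one)
    then show ?thesis unfolding L_def using h0 h1 by (simp add: ln_div)
  qed
  have G: "Gfun h m (PP h \<delta>) 1 - Gfun h m (PP h \<delta>) 0 \<le> 11/4 * h\<^sup>2 + h^4 + 2 * h\<^sup>2 * L + PP h \<delta> * m"
    unfolding L_def by (rule Gfun_bound[OF h0 m0 PP_nonneg])
  have PPm: "PP h \<delta> * m = 700 * (c\<^sup>2 * m) + 6 * (c^4 / m)"
    unfolding PP_def c_def[symmetric] m_def[symmetric] using m0 by (simp add: power2_eq_square field_simps)
  have cb: "\<bar>c\<bar> \<le> 2 * (\<delta> + h)" unfolding c_def by (rule cc_bound)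
  have c2: "c\<^sup>2 \<le> 8 * \<delta>\<^sup>2 + 8 * h\<^sup>2"
  proof -
    have "c\<^sup>2 = \<bar>c\<bar>\<^sup>2" by simp
    also have "\<dots> \<le> (2 * (\<delta> + h))\<^sup>2" using cb by (intro power_mono) auto
    also have "\<dots> = 4 * (\<delta> + h)\<^sup>2" by (simp add: power2_eq_square algebra_simps)
    also have "\<dots> \<le> 4 * (2 * \<delta>\<^sup>2 + 2 * h\<^sup>2)" by (intro mult_left_mono sq2) auto
    finally show ?thesis by simp
  qed
  have c4: "c^4 \<le> 128 * \<delta>^4 + 128 * h^4"
  proof -
    have "c^4 = (c\<^sup>2)\<^sup>2" by (simp flip: power_mult)
    also have "\<dots> \<le> (8 * \<delta>\<^sup>2 + 8 * h\<^sup>2)\<^sup>2" using c2 by (intro power_mono) auto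
    also have "\<dots> = 64 * (\<delta>\<^sup>2 + h\<^sup>2)\<^sup>2" by (simp add: power2_eq_square algebra_simps)
    also have "\<dots> \<le> 64 * (2 * (\<delta>\<^sup>2)\<^sup>2 + 2 * (h\<^sup>2)\<^sup>2)" by (intro mult_left_mono sq2) auto
    also have "\<dots> = 128 * \<delta>^4 + 128 * h^4" by (simp flip: power_mult)
    finally show ?thesis .
  qed
  have t1: "c\<^sup>2 * m \<le> 8 * (\<delta>\<^sup>2 * m) + 8 * h\<^sup>2"
  proof -
    have "c\<^sup>2 * m \<le> (8 * \<delta>\<^sup>2 + 8 * h\<^sup>2) * m" using c2 m0 by (intro mult_right_mono) auto
    also have "\<dots> = 8 * (\<delta>\<^sup>2 * m) + 8 * (h\<^sup>2 * m)" by (simp add: algebra_simps)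
    also have "h\<^sup>2 * m \<le> h\<^sup>2 * 1" using m1 by (intro mult_left_mono) auto
    finally show ?thesis by simp
  qed
  have h4m: "h^4 / m \<le> h\<^sup>2"
  proof -
    have "h\<^sup>2 \<le> h" using h0 h1 by (simp add: power2_eq_square mult_left_le_one_le)
    then have "h\<^sup>2 \<le> m" using hm by linarith
    then have "h\<^sup>2 * h\<^sup>2 \<le> h\<^sup>2 * m" by (intro mult_left_mono) auto
    then have "h^4 \<le> h\<^sup>2 * m" by (simp add: power2_eq_square power4_eq_xxxx)
    then show ?thesis using m0 by (simp add: divide_le_eq)
  qed
  have t2: "c^4 / m \<le> 128 * (\<delta>^4 / m) + 128 * h\<^sup>2"
  proof -
    have "c^4 / m \<le> (128 * \<delta>^4 + 128 * h^4) / m" using c4 m0 by (intro divide_right_mono) auto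
    also have "\<dots> = 128 * (\<delta>^4 / m) + 128 * (h^4 / m)" by (simp add: add_divide_distrib)
    finally show ?thesis using h4m by linarith
  qed
  have h4: "h^4 \<le> h\<^sup>2"
  proof -
    have "h\<^sup>2 * h\<^sup>2 \<le> 1 * h\<^sup>2" using h0 h1 by (intro mult_right_mono) (auto simp: power_le_one)
    then show ?thesis by (simp add: power2_eq_square power4_eq_xxxx)
  qed
  have hL: "h\<^sup>2 \<le> 2 * (h\<^sup>2 * L)"
  proof -
    have "h\<^sup>2 * (1/2) \<le> h\<^sup>2 * L" using L by (intro mult_left_mono) auto
    then show ?thesis by simp
  qed
  have "Gfun h m (PP h \<delta>) 1 - Gfun h m (PP h \<delta>) 0 \<le> 20000 * (\<delta>\<^sup>2 * m + h\<^sup>2 * L + \<delta>^4 * (1 / m))"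
  proof -
    have e: "2 * h\<^sup>2 * L = 2 * (h\<^sup>2 * L)" "\<delta>^4 * (1 / m) = \<delta>^4 / m" by simp_all
    have nn: "0 \<le> \<delta>\<^sup>2 * m" "0 \<le> \<delta>^4 / m" "0 \<le> h\<^sup>2 * L" using m0 L by auto
    have *: "G \<le> 20000*(d + hl + e)"
      if "G \<le> 11/4*hh + h4 + 2*hl + P" "P = 700*a + 6*b" "a \<le> 8*d + 8*hh"
       "b \<le> 128*e + 128*hh" "h4 \<le> hh" "hh \<le> 2*hl" "0 \<le> d" "0 \<le> e" "0 \<le> hl"
      for G P a b d e hh h4 hl :: real unfolding distrib_left using that by linarith
    show ?thesis unfolding e(2) by (rule *[OF G[unfolded e(1)] PPm t1 t2 h4 hL nn])
  qed
  then show ?thesis unfolding p1 p2 m_def L_def .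
qed

end

theorem lemma2p3:
  shows "\<exists>C>0. \<forall>\<delta> h::real. 0 \<le> \<delta> \<and> \<delta> \<le> 1 \<and> 0 < h \<and> h \<le> 1/2 \<longrightarrow>
    (INF p\<in>Adm \<delta>. Eh h (fst p) (snd p))
      \<le> ennreal (C * (\<delta>\<^sup>2 * h powr (1/2) + h\<^sup>2 * ln (1/h) + \<delta>^4 * h powr (-1/2)))"
proof (intro exI[of _ 20000] conjI allI impI)
  fix \<delta> h :: real
  assume a: "0 \<le> \<delta> \<and> \<delta> \<le> 1 \<and> 0 < h \<and> h \<le> 1/2"
  then have h0: "0 < h" and h1: "h \<le> 1/2" and d0: "0 \<le> \<delta>" and d1: "\<delta> \<le> 1" by auto
  have "(INF p\<in>Adm \<delta>. Eh h (fst p) (snd p)) \<le> Eh h (fst (uu h \<delta>, ww h \<delta>)) (snd (uu h \<delta>, ww h \<delta>))"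
    by (rule INF_lower[OF admissible[OF h0 h1 d0 d1]])
  also have "\<dots> \<le> ennreal (Gfun h (sqrt h) (PP h \<delta>) 1 - Gfun h (sqrt h) (PP h \<delta>) 0)"
    using energy[OF h0 h1 d0 d1] by simp
  also have "\<dots> \<le> ennreal (20000 * (\<delta>\<^sup>2 * h powr (1/2) + h\<^sup>2 * ln (1/h) + \<delta>^4 * h powr (-1/2)))"
    by (rule ennreal_leI[OF final_bound[OF h0 h1 d0 d1]])
  finally show "(INF p\<in>Adm \<delta>. Eh h (fst p) (snd p))
      \<le> ennreal (20000 * (\<delta>\<^sup>2 * h powr (1/2) + h\<^sup>2 * ln (1/h) + \<delta>^4 * h powr (-1/2)))" .
qed simp


end
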